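(* Let $G=(V,E)$ be a connected simple graph with $n=|V|\ge 2$ vertices and let $\lambda_2(G)$ be the second smallest eigenvalue of its Laplacian. For vertices $u,v$ let $\mathbb{P}_{uv}=\{P^{(1)}_{uv},\dots,P^{(n_{uv})}_{uv}\}$ be the set of all shortest paths from $u$ to $v$ (so $n_{uv}=|\mathbb{P}_{uv}|\ge1$), and let $d(u,v)$ be their common length. Let $\alpha$ be a path weighting strategy, i.e. for every ordered pair $(u,v)$ a vector $\alpha_{uv}=(\alpha^{(1)}_{uv},\dots,\alpha^{(n_{uv})}_{uv})$ with $\alpha^{(q)}_{uv}\ge 0$ and $\sum_{q=1}^{n_{uv}}\alpha^{(q)}_{uv}=1$. For each edge $k\in E$ define the extended connection-graph-stability score $$C_k(\alpha)=\frac12\sum_{u\in V}\sum_{v\in V} d(u,v)\sum_{q=1}^{n_{uv}}\varphi^{(q)}_{uv}(k)\,\alpha^{(q)}_{uv},\qquad \varphi^{(q)}_{uv}(k)=\begin{cases}1 & k\in P^{(q)}_{uv},\\ 0&\text{otherwise,}\end{cases}$$ and let $C_{\max}(\alpha)=\max_{k\in E}C_k(\alpha)$. Then for every path weighting strategy $\alpha$, $$\lambda_2(G)\ \ge\ \frac{n}{C_{\max}(\alpha)}.$$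
   Context: The Laplacian of $G$ is $L=D-A$ with $A$ the $0/1$ adjacency matrix and $D$ the diagonal degree matrix; eigenvalues $0=\lambda_1\le\lambda_2\le\dots\le\lambda_n$. The length of a path is its number of edges. For $u=v$ the only shortest path is the trivial one of length $0$, contributing nothing. *)

theory Defs
  imports "Jordan_Normal_Form.Char_Poly" "HOL-Computational_Algebra.Polynomial" "HOL-Library.Multiset"
begin

definition simple_graph :: "nat \<Rightarrow> nat set set \<Rightarrow> bool" where
  "simple_graph n E \<longleftrightarrow> (\<forall>e\<in>E. \<exists>a b. e = {a, b} \<and> a \<noteq> b \<and> a < n \<and> b < n)"

definition adj_matrix :: "nat \<Rightarrow> nat set set \<Rightarrow> real mat" where
  "adj_matrix n E = mat n n (\<lambda>(i, j). if {i, j} \<in> E then 1 else 0)"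

definition degree :: "nat \<Rightarrow> nat set set \<Rightarrow> nat \<Rightarrow> nat" where
  "degree n E i = card {j. j < n \<and> {i, j} \<in> E}"

definition deg_matrix :: "nat \<Rightarrow> nat set set \<Rightarrow> real mat" where
  "deg_matrix n E = mat n n (\<lambda>(i, j). if i = j then real (degree n E i) else 0)"

definition laplacian :: "nat \<Rightarrow> nat set set \<Rightarrow> real mat" where
  "laplacian n E = deg_matrix n E - adj_matrix n E"

definition lap_eigenvalues :: "nat \<Rightarrow> nat set set \<Rightarrow> real list" where
  "lap_eigenvalues n E = sorted_list_of_multiset (proots (char_poly (laplacian n E)))"

definition lambda2 :: "nat \<Rightarrow> nat set set \<Rightarrow> real" where
  "lambda2 n E = lap_eigenvalues n E ! 1"

text \<open>A path is a nonempty list of distinct vertices with consecutive vertices adjacent.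
  Its length is the number of edges, length p - 1.\<close>
definition is_path :: "nat \<Rightarrow> nat set set \<Rightarrow> nat list \<Rightarrow> bool" where
  "is_path n E p \<longleftrightarrow> p \<noteq> [] \<and> distinct p \<and> set p \<subseteq> {0..<n} \<and>
     (\<forall>i. i + 1 < length p \<longrightarrow> {p ! i, p ! (i + 1)} \<in> E)"

definition path_from :: "nat \<Rightarrow> nat set set \<Rightarrow> nat \<Rightarrow> nat \<Rightarrow> nat list \<Rightarrow> bool" where
  "path_from n E u v p \<longleftrightarrow> is_path n E p \<and> hd p = u \<and> last p = v"

definition connected_graph :: "nat \<Rightarrow> nat set set \<Rightarrow> bool" where
  "connected_graph n E \<longleftrightarrow> (\<forall>u<n. \<forall>v<n. \<exists>p. path_from n E u v p)"

definition path_edges :: "nat list \<Rightarrow> nat set set" where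
  "path_edges p = {{p ! i, p ! (i + 1)} | i. i + 1 < length p}"

definition shortest_paths :: "nat \<Rightarrow> nat set set \<Rightarrow> nat \<Rightarrow> nat \<Rightarrow> nat list set" where
  "shortest_paths n E u v =
     {p. path_from n E u v p \<and> (\<forall>p'. path_from n E u v p' \<longrightarrow> length p \<le> length p')}"

definition dist :: "nat \<Rightarrow> nat set set \<Rightarrow> nat \<Rightarrow> nat \<Rightarrow> nat" where
  "dist n E u v = (LEAST k. \<exists>p. path_from n E u v p \<and> length p = k + 1)"

text \<open>Path weighting strategy: for every ordered pair (u,v) a probability vector on the
  shortest u-v paths (values outside the shortest paths are irrelevant).\<close>
definition path_weighting :: "nat \<Rightarrow> nat set set \<Rightarrow> (nat \<Rightarrow> nat \<Rightarrow> nat list \<Rightarrow> real) \<Rightarrow> bool" where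
  "path_weighting n E \<alpha> \<longleftrightarrow>
     (\<forall>u<n. \<forall>v<n. (\<forall>p\<in>shortest_paths n E u v. \<alpha> u v p \<ge> 0) \<and>
                  (\<Sum>p\<in>shortest_paths n E u v. \<alpha> u v p) = 1)"

definition cgs_score :: "nat \<Rightarrow> nat set set \<Rightarrow> (nat \<Rightarrow> nat \<Rightarrow> nat list \<Rightarrow> real) \<Rightarrow> nat set \<Rightarrow> real" where
  "cgs_score n E \<alpha> k = 1/2 * (\<Sum>u<n. \<Sum>v<n. real (dist n E u v) *
      (\<Sum>p\<in>shortest_paths n E u v. (if k \<in> path_edges p then 1 else 0) * \<alpha> u v p))"

definition cgs_max :: "nat \<Rightarrow> nat set set \<Rightarrow> (nat \<Rightarrow> nat \<Rightarrow> nat list \<Rightarrow> real) \<Rightarrow> real" where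
  "cgs_max n E \<alpha> = Max (cgs_score n E \<alpha> ` E)"

end

theory Submission
  imports Defs "HOL-Computational_Algebra.Fundamental_Theorem_Algebra"
begin


lemma real_poly_split:
  fixes q :: "real poly"
  assumes "q \<noteq> 0" "\<And>z. poly (map_poly complex_of_real q) z = 0 \<Longrightarrow> z \<in> \<real>"
  shows "size (proots q) = Polynomial.degree q"
  using assms
proof (induction "Polynomial.degree q" arbitrary: q)
  case 0
  then obtain a where "q = [:a:]" by (metis degree_eq_zeroE)
  then show ?case using 0 by simp
next
  case (Suc d)
  let ?qc = "map_poly complex_of_real q"
  have dq: "Polynomial.degree ?qc = Suc d" using Suc.hyps(2) by simp
  then have "size (proots ?qc) > 0" using size_proots_complex by simp
  then obtain z where "z \<in># proots ?qc" by (metis multiset_nonemptyE size_empty less_irrefl)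
  then have "poly ?qc z = 0" using Suc.prems by simp
  moreover then obtain r where z: "z = of_real r" using Suc.prems by (auto elim: Reals_cases)
  ultimately have "poly q r = 0" by (simp add: of_real_hom.poly_map_poly)
  then obtain q' where q: "q = [:-r,1:] * q'" using poly_eq_0_iff_dvd by (metis dvdE)
  have q'0: "q' \<noteq> 0" using q Suc.prems by auto
  have "Polynomial.degree q = 1 + Polynomial.degree q'" unfolding q
    by (subst degree_mult_eq; simp add: q'0)
  then have dq': "Polynomial.degree q' = d" using Suc.hyps(2) by simp
  have "map_poly complex_of_real q = [:- of_real r, 1:] * map_poly complex_of_real q'"
  proof -
    interpret m: map_poly_comm_ring_hom "complex_of_real" ..
    show ?thesis unfolding q m.hom_mult by simp
  qed
  then have "\<And>z. poly (map_poly complex_of_real q') z = 0 \<Longrightarrow> z \<in> \<real>"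
    using Suc.prems(2) by (metis mult_zero_right poly_mult)
  then have "size (proots q') = d" using Suc.hyps(1)[of q'] dq' q'0 by simp
  moreover have "proots q = {#r#} + proots q'" unfolding q using q'0
    by (subst proots_mult) auto
  ultimately show ?case using Suc.hyps(2) by simp
qed

lemma herm_eig_ge:
  fixes B :: "real mat"
  assumes B: "B \<in> carrier_mat n n" and sym: "\<And>i j. i<n \<Longrightarrow> j<n \<Longrightarrow> B$$(i,j) = B$$(j,i)"
   and Q: "\<And>x. c * (\<Sum>i<n. (x i)^2) \<le> (\<Sum>i<n. \<Sum>j<n. B$$(i,j) * x i * x j)"
   and root: "poly (char_poly (map_mat complex_of_real B)) z = 0"
  shows "z \<in> \<real> \<and> Re z \<ge> c"
proof -
  let ?A = "map_mat complex_of_real B"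
  have A: "?A \<in> carrier_mat n n" using B by simp
  have "eigenvalue ?A z" using eigenvalue_root_char_poly[OF A] root by simp
  then obtain v where "eigenvector ?A v z" unfolding eigenvalue_def by blast
  then have v: "v \<in> carrier_vec n" "v \<noteq> 0\<^sub>v n" "?A *\<^sub>v v = z \<cdot>\<^sub>v v"
    unfolding eigenvector_def using A by auto
  have ev: "(\<Sum>j<n. of_real (B$$(i,j)) * v$j) = z * v$i" if i: "i<n" for i
  proof -
    have "(?A *\<^sub>v v) $ i = (z \<cdot>\<^sub>v v) $ i" using v(3) by simp
    then show ?thesis using i B v(1) by (simp add: scalar_prod_def lessThan_atLeast0)
  qed
  define a where "a i = Re (v$i)" for i
  define b where "b i = Im (v$i)" for i
  define S where "S = (\<Sum>i<n. cnj(v$i) * (\<Sum>j<n. of_real(B$$(i,j))*v$j))"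
  define N where "N = (\<Sum>i<n. (a i)^2 + (b i)^2)"
  have S1: "S = z * of_real N"
  proof -
    have "S = (\<Sum>i<n. z * (cnj(v$i) * v$i))" unfolding S_def using ev by (simp add: ac_simps)
    also have "\<dots> = z * (\<Sum>i<n. of_real ((a i)^2 + (b i)^2))"
      by (simp add: sum_distrib_left a_def b_def complex_mult_cnj mult.commute)
    finally show ?thesis unfolding N_def by simp
  qed
  have ReS: "Re S = (\<Sum>i<n. \<Sum>j<n. B$$(i,j) * a i * a j) + (\<Sum>i<n. \<Sum>j<n. B$$(i,j) * b i * b j)"
    unfolding S_def a_def b_def by (simp add: sum_distrib_left sum.distrib[symmetric] algebra_simps)
  have "Im S = (\<Sum>i<n. \<Sum>j<n. B$$(i,j) * a i * b j) - (\<Sum>i<n. \<Sum>j<n. B$$(i,j) * b i * a j)"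
    unfolding S_def a_def b_def by (simp add: sum_distrib_left sum_subtractf[symmetric] algebra_simps)
  also have "(\<Sum>i<n. \<Sum>j<n. B$$(i,j) * b i * a j) = (\<Sum>i<n. \<Sum>j<n. B$$(i,j) * a i * b j)"
    by (subst sum.swap) (simp add: sym mult_ac)
  finally have ImS: "Im S = 0" by simp
  obtain i where i: "i < n" "v$i \<noteq> 0" using v(1,2) by (metis eq_vecI carrier_vecD index_zero_vec)
  have "(a i)^2 + (b i)^2 > 0" using i(2) unfolding a_def b_def
    by (metis complex_eq_iff zero_complex.simps sum_power2_gt_zero_iff)
  then have Npos: "N > 0" unfolding N_def
    by (intro sum_pos2[of _ i]) (use i in auto)
  have "Im z * N = 0" using ImS S1 by simp
  then have z: "Im z = 0" using Npos by simp
  have "Re z * N = Re S" using S1 by simp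
  also have "\<dots> \<ge> c * (\<Sum>i<n. (a i)^2) + c * (\<Sum>i<n. (b i)^2)" unfolding ReS
    using Q[of a] Q[of b] by (simp add: mult_ac)
  finally have "c * N \<le> Re z * N" unfolding N_def by (simp add: sum.distrib distrib_left)
  then have "c \<le> Re z" using Npos by simp
  then show ?thesis using z by (simp add: complex_is_Real_iff)
qed

lemma mult_P_entry:
  fixes X :: "'a::comm_ring_1 mat"
  assumes X: "X \<in> carrier_mat n n" and i: "i < n" and j: "j < n"
  shows "(X * mat n n (\<lambda>(i,j). if i=j \<or> j=0 then 1 else 0)) $$ (i,j)
     = (if j = 0 then (\<Sum>l<n. X$$(i,l)) else X$$(i,j))"
proof -
  have "(X * mat n n (\<lambda>(i,j). if i=j \<or> j=0 then 1 else 0)) $$ (i,j)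
     = (\<Sum>l<n. X$$(i,l) * (if l=j \<or> j=0 then 1 else 0))"
    using X i j by (simp add: scalar_prod_def lessThan_atLeast0)
  also have "\<dots> = (if j = 0 then (\<Sum>l<n. X$$(i,l)) else X$$(i,j))"
    using j by (cases "j = 0") (simp_all add: if_distrib cong: if_cong)
  finally show ?thesis .
qed

lemma mult_T_entry:
  fixes X :: "'a::comm_ring_1 mat"
  assumes X: "X \<in> carrier_mat n n" and i: "i < n" and j: "j < n"
  shows "(X * mat n n (\<lambda>(i,j). (if i=j then 1 else 0) + (if i=0 then t j else 0))) $$ (i,j)
     = X$$(i,j) + X$$(i,0) * t j"
proof -
  have n: "0 < n" using i by simp
  have "(X * mat n n (\<lambda>(i,j). (if i=j then 1 else 0) + (if i=0 then t j else 0))) $$ (i,j)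
     = (\<Sum>l<n. X$$(i,l) * ((if l=j then 1 else 0) + (if l=0 then t j else 0)))"
    using X i j by (simp add: scalar_prod_def lessThan_atLeast0)
  also have "\<dots> = (\<Sum>l<n. X$$(i,l) * (if l=j then 1 else 0)) + (\<Sum>l<n. X$$(i,l) * (if l=0 then t j else 0))"
    by (simp add: distrib_left sum.distrib)
  also have "\<dots> = X$$(i,j) + X$$(i,0) * t j"
    using j n by (simp add: if_distrib cong: if_cong)
  finally show ?thesis .
qed

lemma det_P: "det (mat n n (\<lambda>(i,j). if i=j \<or> j=0 then 1 else (0::'a::comm_ring_1))) = 1"
proof -
  have "det (mat n n (\<lambda>(i,j). if i=j \<or> j=0 then 1 else (0::'a))) = prod_list (diag_mat (mat n n (\<lambda>(i,j). if i=j \<or> j=0 then 1 else (0::'a))))"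
    by (rule det_lower_triangular[of n]) auto
  also have "diag_mat (mat n n (\<lambda>(i,j). if i=j \<or> j=0 then 1 else (0::'a))) = map (\<lambda>i. 1) [0..<n]"
    unfolding diag_mat_def by auto
  finally show ?thesis by (simp add: prod_list_replicate map_replicate_const)
qed

lemma det_T: assumes n: "0 < n"
  shows "det (mat n n (\<lambda>(i,j). (if i=j then 1 else 0) + (if i=0 then t j else (0::'a::comm_ring_1)))) = 1 + t 0"
proof -
  let ?T = "mat n n (\<lambda>(i,j). (if i=j then 1 else 0) + (if i=0 then t j else (0::'a)))"
  have "det ?T = prod_list (diag_mat ?T)"
    by (rule det_upper_triangular[of _ n]) (auto simp: upper_triangular_def)
  also have "diag_mat ?T = (1 + t 0) # map (\<lambda>i. 1) [1..<n]"
    unfolding diag_mat_def using n by (auto simp: upt_conv_Cons)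
  finally show ?thesis by (simp add: map_replicate_const)
qed

lemma char_poly_shift:
  fixes L :: "real mat"
  assumes L: "L \<in> carrier_mat n n" and rows: "\<And>i. i<n \<Longrightarrow> (\<Sum>j<n. L$$(i,j)) = 0" and n: "n>0"
  shows "poly (char_poly (mat n n (\<lambda>(i,j). L$$(i,j) + s))) k * k = poly (char_poly L) k * (k - s * n)"
proof -
  define L' where "L' = mat n n (\<lambda>(i,j). L$$(i,j) + s)"
  have L': "L' \<in> carrier_mat n n" unfolding L'_def by simp
  define N where "N = mat n n (\<lambda>(i,j). (if i=j then k else 0) - L$$(i,j))"
  define M where "M = mat n n (\<lambda>(i,j). (if i=j then k else 0) - L$$(i,j) - s)"
  have N: "N \<in> carrier_mat n n" and M: "M \<in> carrier_mat n n" unfolding N_def M_def by auto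
  have pN: "poly (char_poly L) k = det N"
    unfolding char_poly_matrix[OF L] N_def
    by (rule arg_cong[where f=det], rule eq_matI) (use L in \<open>auto simp: char_matrix_def\<close>)
  have pM: "poly (char_poly L') k = det M"
    unfolding char_poly_matrix[OF L'] M_def
    by (rule arg_cong[where f=det], rule eq_matI) (use L in \<open>auto simp: char_matrix_def L'_def\<close>)
  have rowN: "(\<Sum>l<n. N$$(i,l)) = k" if "i<n" for i
  proof -
    have "(\<Sum>l<n. N$$(i,l)) = (\<Sum>l<n. (if i=l then k else 0)) - (\<Sum>l<n. L$$(i,l))"
      unfolding N_def using that by (simp add: sum_subtractf)
    then show ?thesis using rows[OF that] that by simp
  qed
  have rowM: "(\<Sum>l<n. M$$(i,l)) = k - s * n" if "i<n" for i
  proof -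
    have "(\<Sum>l<n. M$$(i,l)) = (\<Sum>l<n. N$$(i,l)) - (\<Sum>l<n. s)"
      unfolding N_def M_def using that by (simp add: sum_subtractf)
    then show ?thesis using rowN[OF that] by simp
  qed
  show ?thesis
  proof (cases "k = 0")
    case True
    let ?one = "vec n (\<lambda>_. 1::real)"
    have "N *\<^sub>v ?one = 0\<^sub>v n"
    proof (rule eq_vecI)
      fix i assume i: "i < dim_vec (0\<^sub>v n :: real vec)"
      have "(N *\<^sub>v ?one) $ i = (\<Sum>l<n. N$$(i,l))"
        using i N by (simp add: scalar_prod_def lessThan_atLeast0)
      also have "\<dots> = 0" using rowN i True by simp
      finally show "(N *\<^sub>v ?one) $ i = 0\<^sub>v n $ i" using i by simp
    qed (use N in simp)
    moreover have "?one \<noteq> 0\<^sub>v n" using n by (metis index_vec index_zero_vec(1) zero_neq_one)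
    moreover have "?one \<in> carrier_vec n" by simp
    ultimately have "det N = 0" using det_0_iff_vec_prod_zero[OF N] by blast
    then show ?thesis using True pN by (simp add: L'_def[symmetric])
  next
    case False
    define P where "P = mat n n (\<lambda>(i,j). if i=j \<or> j=0 then 1 else (0::real))"
    define t where "t (j::nat) = (if j = 0 then - (s*n)/k else - s/k)" for j
    define T where "T = mat n n (\<lambda>(i,j). (if i=j then 1 else 0) + (if i=0 then t j else (0::real)))"
    have P: "P \<in> carrier_mat n n" and T: "T \<in> carrier_mat n n" unfolding P_def T_def by auto
    have MP: "M * P = (N * P) * T"
    proof (rule eq_matI)
      fix i j assume ij: "i < dim_row ((N * P) * T)" "j < dim_col ((N * P) * T)"
      then have i: "i < n" and j: "j < n" using N P T by auto
      have NP: "N * P \<in> carrier_mat n n" using N P by simp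
      have "((N * P) * T) $$ (i,j) = (N*P)$$(i,j) + (N*P)$$(i,0) * t j"
        unfolding T_def by (rule mult_T_entry[OF NP i j])
      also have "\<dots> = (M * P) $$ (i,j)"
        unfolding P_def mult_P_entry[OF N i j] mult_P_entry[OF N i n] mult_P_entry[OF M i j]
        using rowN[OF i] rowM[OF i] i j False
        by (auto simp: t_def M_def N_def field_simps)
      finally show "(M * P) $$ (i,j) = ((N * P) * T) $$ (i,j)" by simp
    qed (use N M P T in auto)
    have "det M = det M * det P" unfolding P_def det_P by simp
    also have "\<dots> = det (M * P)" using det_mult[OF M P] by simp
    also have "\<dots> = det N * det P * det T" unfolding MP
      using det_mult[OF N P] det_mult[of "N*P" n T] N P T by simp
    also have "\<dots> = det N * (1 - s * n / k)" unfolding P_def T_def det_P det_T[OF n] t_def by simp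
    finally have "det M * k = det N * (k - s * n)" using False by (simp add: field_simps)
    then show ?thesis using pM pN by (simp add: L'_def)
  qed
qed

lemma spectral_bound:
  fixes L :: "real mat" and K :: real
  assumes L: "L \<in> carrier_mat n n" and sym: "\<And>i j. i<n \<Longrightarrow> j<n \<Longrightarrow> L$$(i,j) = L$$(j,i)"
   and rows: "\<And>i. i<n \<Longrightarrow> (\<Sum>j<n. L$$(i,j)) = 0" and n: "n \<ge> 2" and K: "K > 0"
   and Q: "\<And>x. real n * (\<Sum>i<n. (x i)^2) - (\<Sum>i<n. x i)^2 \<le> K * (\<Sum>i<n. \<Sum>j<n. L$$(i,j) * x i * x j)"
  shows "real n / K \<le> sorted_list_of_multiset (proots (char_poly L)) ! 1"
proof -
  define c where "c = real n / K"
  define s where "s = 1 / K"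
  have c0: "c > 0" unfolding c_def using n K by simp
  have sn: "s * n = c" unfolding s_def c_def by simp
  define L' where "L' = mat n n (\<lambda>(i,j). L$$(i,j) + s)"
  have L': "L' \<in> carrier_mat n n" unfolding L'_def by simp
  have sym': "L'$$(i,j) = L'$$(j,i)" if "i<n" "j<n" for i j
    unfolding L'_def using that sym by simp
  have Q': "c * (\<Sum>i<n. (x i)^2) \<le> (\<Sum>i<n. \<Sum>j<n. L'$$(i,j) * x i * x j)" for x
  proof -
    have "(\<Sum>i<n. \<Sum>j<n. L'$$(i,j) * x i * x j) = (\<Sum>i<n. \<Sum>j<n. L$$(i,j) * x i * x j) + s * (\<Sum>i<n. \<Sum>j<n. x i * x j)"
      unfolding L'_def by (simp add: algebra_simps sum.distrib sum_distrib_left)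
    also have "(\<Sum>i<n. \<Sum>j<n. x i * x j) = (\<Sum>i<n. x i)^2"
      by (simp add: power2_eq_square sum_product)
    finally have eq: "(\<Sum>i<n. \<Sum>j<n. L'$$(i,j) * x i * x j) = (\<Sum>i<n. \<Sum>j<n. L$$(i,j) * x i * x j) + s * (\<Sum>i<n. x i)^2" .
    have "c * (\<Sum>i<n. (x i)^2) - s * (\<Sum>i<n. x i)^2 = (real n * (\<Sum>i<n. (x i)^2) - (\<Sum>i<n. x i)^2) / K"
      unfolding c_def s_def by (simp add: diff_divide_distrib)
    also have "\<dots> \<le> (\<Sum>i<n. \<Sum>j<n. L$$(i,j) * x i * x j)"
      using Q[of x] K by (simp add: divide_le_eq mult.commute)
    finally show ?thesis unfolding eq by simp
  qed
  define q where "q = char_poly L'"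
  define p where "p = char_poly L"
  have qc: "char_poly (map_mat complex_of_real L') = map_poly complex_of_real q"
    unfolding q_def using of_real_hom.char_poly_hom[OF L'] by simp
  have roots_q: "z \<in> \<real> \<and> Re z \<ge> c" if "poly (map_poly complex_of_real q) z = 0" for z
    using herm_eig_ge[OF L' sym' Q'] that qc by auto
  have dq: "Polynomial.degree q = n" "coeff q n = 1" unfolding q_def using degree_monic_char_poly[OF L'] by auto
  have dp: "Polynomial.degree p = n" "coeff p n = 1" unfolding p_def using degree_monic_char_poly[OF L] by auto
  have q0: "q \<noteq> 0" using dq by auto
  have p0: "p \<noteq> 0" using dp by auto
  have sizeq: "size (proots q) = n" using real_poly_split[OF q0] roots_q dq by auto
  have geq: "r \<ge> c" if "r \<in># proots q" for r
  proof -
    have "poly q r = 0" using that q0 by simp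
    then have "poly (map_poly complex_of_real q) (of_real r) = 0" by (simp add: of_real_hom.poly_map_poly)
    then show ?thesis using roots_q by fastforce
  qed
  have ident: "q * [:0,1:] = p * [:-c,1:]"
  proof (rule poly_eq_poly_eq_iff[THEN iffD1], rule ext)
    fix k
    show "poly (q * [:0,1:]) k = poly (p * [:-c,1:]) k"
      using char_poly_shift[OF L rows, of s k] n sn unfolding q_def p_def L'_def by (simp add: algebra_simps)
  qed
  have "proots (q * [:0,1:]) = proots q + {#0#}"
    using q0 proots_mult[of q "[:0,1:]"] proots_linear_factor[of "0::real"] by simp
  moreover have "proots (p * [:-c,1:]) = proots p + {#c#}"
    using p0 proots_mult[of p "[:-c,1:]"] proots_linear_factor[of "-c"] by simp
  ultimately have eqm: "proots q + {#0#} = proots p + {#c#}"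
    using ident by metis
  define MP where "MP = proots p"
  have sizep: "size MP = n" using arg_cong[OF eqm, of size] sizeq unfolding MP_def by simp
  have "filter_mset (\<lambda>x. x < c) (proots q + {#0#}) = filter_mset (\<lambda>x. x < c) (MP + {#c#})"
    using eqm unfolding MP_def by simp
  moreover have "filter_mset (\<lambda>x. x < c) (proots q) = {#}"
    using geq by (auto simp: not_less)
  ultimately have filt: "filter_mset (\<lambda>x. x < c) MP = {#0#}" using c0 by simp
  define xs where "xs = sorted_list_of_multiset MP"
  have lxs: "length xs = n" unfolding xs_def using sizep by (metis mset_sorted_list_of_multiset size_mset)
  have sxs: "sorted xs" unfolding xs_def by simp
  obtain a b rest where xs: "xs = a # b # rest" using lxs n
    by (metis Suc_le_length_iff numeral_2_eq_2)
  show ?thesis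
  proof (rule ccontr)
    assume "\<not> ?thesis"
    then have bc: "b < c" using xs unfolding xs_def c_def p_def MP_def by simp
    have "a \<le> b" using sxs xs by simp
    then have ac: "a < c" using bc by simp
    have "mset (filter (\<lambda>x. x < c) xs) = filter_mset (\<lambda>x. x < c) MP"
      unfolding xs_def by simp
    then have "length (filter (\<lambda>x. x < c) xs) = 1" using filt by (metis size_mset size_single)
    moreover have "length (filter (\<lambda>x. x < c) xs) \<ge> 2" using xs ac bc by simp
    ultimately show False by simp
  qed
qed



definition Dx :: "(nat \<Rightarrow> real) \<Rightarrow> nat set \<Rightarrow> real" where
  "Dx x e = (Max (x ` e) - Min (x ` e))^2"

lemma Dx_pair: "Dx x {a,b} = (x a - x b)^2"
  unfolding Dx_def by (cases "x a \<le> x b") (auto simp: max_def min_def power2_commute)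

lemma Dx_nonneg: "Dx x e \<ge> 0" unfolding Dx_def by simp

lemma sumsq_expand:
  fixes y :: "nat \<Rightarrow> real"
  shows "(\<Sum>i\<in>A. \<Sum>j\<in>A. (y i - y j)^2) = 2 * real (card A) * (\<Sum>i\<in>A. (y i)^2) - 2 * (\<Sum>i\<in>A. y i)^2"
proof -
  have "(\<Sum>i\<in>A. \<Sum>j\<in>A. (y i - y j)^2) = (\<Sum>i\<in>A. \<Sum>j\<in>A. (y i)^2 + (y j)^2 - 2 * (y i * y j))"
    by (simp add: power2_diff mult_ac)
  also have "\<dots> = (\<Sum>i\<in>A. \<Sum>j\<in>A. (y i)^2) + (\<Sum>i\<in>A. \<Sum>j\<in>A. (y j)^2) - 2 * (\<Sum>i\<in>A. \<Sum>j\<in>A. y i * y j)"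
    by (simp only: sum.distrib sum_subtractf sum_distrib_left)
  also have "(\<Sum>i\<in>A. \<Sum>j\<in>A. y i * y j) = (\<Sum>i\<in>A. y i)^2"
    by (simp only: sum_product power2_eq_square)
  also have "(\<Sum>i\<in>A. \<Sum>j\<in>A. (y i)^2) = real (card A) * (\<Sum>i\<in>A. (y i)^2)"
    by (simp add: sum_distrib_left mult.commute)
  also have "(\<Sum>i\<in>A. \<Sum>j\<in>A. (y j)^2) = real (card A) * (\<Sum>i\<in>A. (y i)^2)"
    by simp
  finally show ?thesis by simp
qed

lemma cauchy_sum:
  fixes y :: "nat \<Rightarrow> real"
  shows "(\<Sum>i<m. y i)^2 \<le> real m * (\<Sum>i<m. (y i)^2)"
proof -
  have "0 \<le> (\<Sum>i<m. \<Sum>j<m. (y i - y j)^2)" by (intro sum_nonneg) simp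
  then show ?thesis unfolding sumsq_expand by simp
qed

lemma shortest_len:
  assumes "p \<in> shortest_paths n E u v"
  shows "length p = dist n E u v + 1"
proof -
  have pf: "path_from n E u v p" and mn: "\<And>p'. path_from n E u v p' \<Longrightarrow> length p \<le> length p'"
    using assms unfolding shortest_paths_def by auto
  have ne: "p \<noteq> []" using pf unfolding path_from_def is_path_def by auto
  have "dist n E u v = length p - 1"
    unfolding dist_def
  proof (rule Least_equality)
    show "\<exists>p'. path_from n E u v p' \<and> length p' = length p - 1 + 1" using pf ne by auto
  next
    fix k assume "\<exists>p'. path_from n E u v p' \<and> length p' = k + 1"
    then show "length p - 1 \<le> k" using mn by force
  qed
  then show ?thesis using ne by simp
qed

lemma shortest_finite: "finite (shortest_paths n E u v)"
proof (rule finite_subset)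
  show "shortest_paths n E u v \<subseteq> {xs. set xs \<subseteq> {0..<n} \<and> length xs \<le> n}"
  proof
    fix p assume "p \<in> shortest_paths n E u v"
    then have "is_path n E p" unfolding shortest_paths_def path_from_def by auto
    then have "distinct p" "set p \<subseteq> {0..<n}" unfolding is_path_def by auto
    then show "p \<in> {xs. set xs \<subseteq> {0..<n} \<and> length xs \<le> n}"
      using card_mono[OF finite_atLeastLessThan, of "set p" 0 n] distinct_card[of p] by auto
  qed
qed (rule finite_lists_length_le[OF finite_atLeastLessThan])

lemma path_edges_sub: "is_path n E p \<Longrightarrow> path_edges p \<subseteq> E"
  unfolding is_path_def path_edges_def by auto

lemma path_bound:
  assumes "p \<in> shortest_paths n E u v"
  shows "(x u - x v)^2 \<le> real (dist n E u v) * (\<Sum>e\<in>path_edges p. Dx x e)"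
proof -
  have pf: "path_from n E u v p" using assms unfolding shortest_paths_def by auto
  then have ip: "is_path n E p" and hu: "hd p = u" and lv: "last p = v" unfolding path_from_def by auto
  have ne: "p \<noteq> []" and dp: "distinct p" using ip unfolding is_path_def by auto
  define m where "m = length p - 1"
  have lp: "length p = m + 1" using ne unfolding m_def by simp
  have dm: "dist n E u v = m" using shortest_len[OF assms] lp by simp
  have pe: "path_edges p = (\<lambda>i. {p!i, p!Suc i}) ` {..<m}"
    unfolding path_edges_def lp by auto
  have inj: "inj_on (\<lambda>i. {p!i, p!Suc i}) {..<m}"
  proof (rule inj_onI)
    fix i j assume i: "i \<in> {..<m}" and j: "j \<in> {..<m}" and eq: "{p!i, p!Suc i} = {p!j, p!Suc j}"
    have inj': "\<And>a b. a < length p \<Longrightarrow> b < length p \<Longrightarrow> p!a = p!b \<Longrightarrow> a = b"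
      using dp by (simp add: nth_eq_iff_index_eq)
    from eq have "(p!i = p!j \<and> p!Suc i = p!Suc j) \<or> (p!i = p!Suc j \<and> p!Suc i = p!j)"
      by (auto simp: doubleton_eq_iff)
    then show "i = j"
    proof
      assume "p!i = p!j \<and> p!Suc i = p!Suc j" then show ?thesis using inj'[of i j] i j lp by auto
    next
      assume h: "p!i = p!Suc j \<and> p!Suc i = p!j"
      then have "i = Suc j" "Suc i = j" using inj'[of i "Suc j"] inj'[of "Suc i" j] i j lp by auto
      then show ?thesis by simp
    qed
  qed
  have sumD: "(\<Sum>e\<in>path_edges p. Dx x e) = (\<Sum>i<m. (x (p!i) - x (p!Suc i))^2)"
    unfolding pe by (simp add: sum.reindex[OF inj] Dx_pair)
  have tel: "x u - x v = (\<Sum>i<m. x (p!i) - x (p!Suc i))"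
  proof -
    have "(\<Sum>i<m. x (p!i) - x (p!Suc i)) = x (p!0) - x (p!m)"
      by (induction m) auto
    moreover have "p!0 = u" using hu ne by (simp add: hd_conv_nth)
    moreover have "p!m = v" using lv ne lp by (simp add: last_conv_nth)
    ultimately show ?thesis by simp
  qed
  show ?thesis unfolding tel sumD dm by (rule cauchy_sum)
qed

lemma sg_edge: "simple_graph n E \<Longrightarrow> e \<in> E \<Longrightarrow> \<exists>a b. e = {a,b} \<and> a \<noteq> b \<and> a < n \<and> b < n"
  unfolding simple_graph_def by blast

lemma sg_finite: assumes "simple_graph n E" shows "finite E"
proof (rule finite_subset)
  show "E \<subseteq> Pow {0..<n}" using sg_edge[OF assms] by fastforce
qed simp

lemma main_ineq:
  assumes sg: "simple_graph n E" and pw: "path_weighting n E \<alpha>"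
  shows "real n * (\<Sum>i<n. (x i)^2) - (\<Sum>i<n. x i)^2 \<le> cgs_max n E \<alpha> * (\<Sum>e\<in>E. Dx x e)"
proof -
  define d where "d u v = real (dist n E u v)" for u v
  define SP where "SP u v = shortest_paths n E u v" for u v
  define w where "w e u v = d u v * (\<Sum>p\<in>SP u v. (if e \<in> path_edges p then 1 else 0) * \<alpha> u v p)" for e u v
  have fin: "finite E" by (rule sg_finite[OF sg])
  have finSP: "finite (SP u v)" for u v unfolding SP_def by (rule shortest_finite)
  have Cle: "cgs_score n E \<alpha> e \<le> cgs_max n E \<alpha>" if "e \<in> E" for e
    unfolding cgs_max_def using fin that by simp
  have Cw: "cgs_score n E \<alpha> e = 1/2 * (\<Sum>u<n. \<Sum>v<n. w e u v)" for e
    unfolding cgs_score_def w_def d_def SP_def by simp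
  have step1: "(x u - x v)^2 \<le> d u v * (\<Sum>p\<in>SP u v. \<alpha> u v p * (\<Sum>e\<in>path_edges p. Dx x e))"
    if u: "u < n" and v: "v < n" for u v
  proof -
    have a1: "(\<Sum>p\<in>SP u v. \<alpha> u v p) = 1" and a0: "\<And>p. p \<in> SP u v \<Longrightarrow> \<alpha> u v p \<ge> 0"
      using pw u v unfolding path_weighting_def SP_def by auto
    have "(x u - x v)^2 = (\<Sum>p\<in>SP u v. \<alpha> u v p * (x u - x v)^2)"
      by (simp add: sum_distrib_right[symmetric] a1)
    also have "\<dots> \<le> (\<Sum>p\<in>SP u v. \<alpha> u v p * (d u v * (\<Sum>e\<in>path_edges p. Dx x e)))"
      by (intro sum_mono mult_left_mono a0) (auto simp: d_def SP_def intro: path_bound)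
    also have "\<dots> = d u v * (\<Sum>p\<in>SP u v. \<alpha> u v p * (\<Sum>e\<in>path_edges p. Dx x e))"
      by (simp add: sum_distrib_left mult_ac)
    finally show ?thesis .
  qed
  have step2: "d u v * (\<Sum>p\<in>SP u v. \<alpha> u v p * (\<Sum>e\<in>path_edges p. Dx x e)) = (\<Sum>e\<in>E. Dx x e * w e u v)" for u v
  proof -
    have "(\<Sum>e\<in>path_edges p. Dx x e) = (\<Sum>e\<in>E. (if e \<in> path_edges p then 1 else 0) * Dx x e)"
      if "p \<in> SP u v" for p
    proof -
      have "path_edges p \<subseteq> E" using that path_edges_sub unfolding SP_def shortest_paths_def path_from_def by blast
      then have "E \<inter> path_edges p = path_edges p" by blast
      then show ?thesis using sum.inter_restrict[OF fin, of "Dx x" "path_edges p"] by (simp add: if_distrib if_distribR cong: if_cong)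
    qed
    then have "d u v * (\<Sum>p\<in>SP u v. \<alpha> u v p * (\<Sum>e\<in>path_edges p. Dx x e))
       = d u v * (\<Sum>p\<in>SP u v. \<alpha> u v p * (\<Sum>e\<in>E. (if e \<in> path_edges p then 1 else 0) * Dx x e))"
      by simp
    also have "\<dots> = (\<Sum>p\<in>SP u v. \<Sum>e\<in>E. Dx x e * (d u v * ((if e \<in> path_edges p then 1 else 0) * \<alpha> u v p)))"
      by (simp add: sum_distrib_left mult_ac)
    also have "\<dots> = (\<Sum>e\<in>E. \<Sum>p\<in>SP u v. Dx x e * (d u v * ((if e \<in> path_edges p then 1 else 0) * \<alpha> u v p)))"
      by (rule sum.swap)
    also have "\<dots> = (\<Sum>e\<in>E. Dx x e * w e u v)"
      unfolding w_def by (simp add: sum_distrib_left)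
    finally show ?thesis .
  qed
  have "2 * (real n * (\<Sum>i<n. (x i)^2) - (\<Sum>i<n. x i)^2) = (\<Sum>u<n. \<Sum>v<n. (x u - x v)^2)"
    using sumsq_expand[of x "{..<n}"] by simp
  also have "\<dots> \<le> (\<Sum>u<n. \<Sum>v<n. \<Sum>e\<in>E. Dx x e * w e u v)"
    using step1 step2 by (intro sum_mono) auto
  also have "\<dots> = (\<Sum>u<n. \<Sum>e\<in>E. \<Sum>v<n. Dx x e * w e u v)"
    by (subst sum.swap) simp
  also have "\<dots> = (\<Sum>e\<in>E. \<Sum>u<n. \<Sum>v<n. Dx x e * w e u v)"
    by (rule sum.swap)
  also have "\<dots> = (\<Sum>e\<in>E. Dx x e * (2 * cgs_score n E \<alpha> e))"
    unfolding Cw by (simp add: sum_distrib_left)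
  also have "\<dots> \<le> (\<Sum>e\<in>E. Dx x e * (2 * cgs_max n E \<alpha>))"
    using Cle Dx_nonneg by (intro sum_mono mult_left_mono) auto
  also have "\<dots> = 2 * (cgs_max n E \<alpha> * (\<Sum>e\<in>E. Dx x e))"
    by (simp add: sum_distrib_left sum_distrib_right mult_ac)
  finally show ?thesis by simp
qed

lemma lap_carrier: "laplacian n E \<in> carrier_mat n n"
  unfolding laplacian_def deg_matrix_def adj_matrix_def by (rule minus_carrier_mat) simp

lemma lap_entry: "i < n \<Longrightarrow> j < n \<Longrightarrow> laplacian n E $$ (i,j) =
   (if i = j then real (degree n E i) else 0) - (if {i,j} \<in> E then 1 else 0)"
  unfolding laplacian_def deg_matrix_def adj_matrix_def by simp

lemma deg_sum: "real (degree n E i) = (\<Sum>j<n. if {i,j} \<in> E then 1 else 0)"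
proof -
  have "{j. j < n \<and> {i,j} \<in> E} = {j\<in>{..<n}. {i,j} \<in> E}" by auto
  then have "real (degree n E i) = (\<Sum>j\<in>{j\<in>{..<n}. {i,j} \<in> E}. 1)" unfolding degree_def by simp
  also have "\<dots> = (\<Sum>j<n. if {i,j} \<in> E then 1 else 0)" by (rule sum.inter_filter) simp
  finally show ?thesis .
qed

lemma sg_noloop: "simple_graph n E \<Longrightarrow> {i,i} \<notin> E"
  using sg_edge by fastforce

lemma lap_sym: "i < n \<Longrightarrow> j < n \<Longrightarrow> laplacian n E $$ (i,j) = laplacian n E $$ (j,i)"
  by (simp add: lap_entry insert_commute)

lemma lap_rows: assumes sg: "simple_graph n E" and i: "i < n"
  shows "(\<Sum>j<n. laplacian n E $$ (i,j)) = 0"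
proof -
  have "(\<Sum>j<n. laplacian n E $$ (i,j)) = (\<Sum>j<n. (if i = j then real (degree n E i) else 0)) - (\<Sum>j<n. if {i,j} \<in> E then 1 else 0)"
    using i by (simp add: lap_entry sum_subtractf)
  also have "\<dots> = 0" using i by (simp add: deg_sum)
  finally show ?thesis .
qed

lemma count_pairs: fixes a b n :: nat assumes "a \<noteq> b" "a < n" "b < n"
  shows "(\<Sum>i<n. \<Sum>j<n. if {a,b} = {i,j} then 1 else 0::real) = 2"
proof -
  have inner: "(\<Sum>j<n. if {a,b} = {i,j} then 1 else 0::real) = (if i = a then 1 else 0) + (if i = b then 1 else 0)" for i
  proof -
    have "(\<Sum>j<n. if {a,b} = {i,j} then 1 else 0::real) = (\<Sum>j<n. (if i = a \<and> j = b then 1 else 0) + (if i = b \<and> j = a then 1 else 0))"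
    proof (intro sum.cong refl)
      fix j
      have "{a,b} = {i,j} \<longleftrightarrow> (i = a \<and> j = b) \<or> (i = b \<and> j = a)" by (auto simp: doubleton_eq_iff)
      then show "(if {a,b} = {i,j} then 1 else 0::real) = (if i = a \<and> j = b then 1 else 0) + (if i = b \<and> j = a then 1 else 0)"
        using assms(1) by auto
    qed
    also have "\<dots> = (\<Sum>j<n. (if i = a \<and> j = b then 1 else 0)) + (\<Sum>j<n. (if i = b \<and> j = a then 1 else 0::real))"
      by (rule sum.distrib)
    also have "(\<Sum>j<n. (if i = a \<and> j = b then 1 else 0::real)) = (if i = a then 1 else 0)"
      using assms by (cases "i = a") (simp_all add: sum.If_cases)
    also have "(\<Sum>j<n. (if i = b \<and> j = a then 1 else 0::real)) = (if i = b then 1 else 0)"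
      using assms by (cases "i = b") (simp_all add: sum.If_cases)
    finally show ?thesis .
  qed
  have "(\<Sum>i<n. \<Sum>j<n. if {a,b} = {i,j} then 1 else 0::real) = (\<Sum>i<n. (if i = a then 1 else 0::real)) + (\<Sum>i<n. if i = b then 1 else 0)"
    unfolding inner by (rule sum.distrib)
  then show ?thesis using assms by simp
qed

lemma lap_quad: assumes sg: "simple_graph n E"
  shows "(\<Sum>i<n. \<Sum>j<n. laplacian n E $$ (i,j) * x i * x j) = (\<Sum>e\<in>E. Dx x e)"
proof -
  define A where "A i j = (if {i,j} \<in> E then 1 else 0::real)" for i j
  define dg where "dg i = real (degree n E i)" for i
  have fin: "finite E" by (rule sg_finite[OF sg])
  have dgA: "dg i = (\<Sum>j<n. A i j)" for i unfolding dg_def A_def by (rule deg_sum)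
  have Asym: "A i j = A j i" for i j unfolding A_def by (simp add: insert_commute)
  have Q1: "(\<Sum>i<n. \<Sum>j<n. laplacian n E $$ (i,j) * x i * x j) = (\<Sum>i<n. dg i * (x i)^2) - (\<Sum>i<n. \<Sum>j<n. A i j * x i * x j)"
  proof -
    have "(\<Sum>i<n. \<Sum>j<n. laplacian n E $$ (i,j) * x i * x j) = (\<Sum>i<n. \<Sum>j<n. (if i = j then dg i * x i * x j else 0) - A i j * x i * x j)"
      by (intro sum.cong refl) (simp add: lap_entry A_def dg_def algebra_simps)
    also have "\<dots> = (\<Sum>i<n. dg i * (x i)^2) - (\<Sum>i<n. \<Sum>j<n. A i j * x i * x j)"
      by (simp add: sum_subtractf power2_eq_square mult_ac)
    finally show ?thesis .
  qed
  have H1: "(\<Sum>i<n. \<Sum>j<n. A i j * (x i - x j)^2) = 2 * (\<Sum>i<n. dg i * (x i)^2) - 2 * (\<Sum>i<n. \<Sum>j<n. A i j * x i * x j)"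
  proof -
    have "(\<Sum>i<n. \<Sum>j<n. A i j * (x i - x j)^2) = (\<Sum>i<n. \<Sum>j<n. A i j * (x i)^2) + (\<Sum>i<n. \<Sum>j<n. A i j * (x j)^2) - 2 * (\<Sum>i<n. \<Sum>j<n. A i j * x i * x j)"
    proof -
      have "(\<Sum>i<n. \<Sum>j<n. A i j * (x i - x j)^2) = (\<Sum>i<n. \<Sum>j<n. A i j * (x i)^2 + A i j * (x j)^2 - 2 * (A i j * x i * x j))"
        by (intro sum.cong refl) (simp add: power2_diff algebra_simps)
      also have "\<dots> = (\<Sum>i<n. \<Sum>j<n. A i j * (x i)^2) + (\<Sum>i<n. \<Sum>j<n. A i j * (x j)^2) - 2 * (\<Sum>i<n. \<Sum>j<n. A i j * x i * x j)"
        by (simp only: sum.distrib sum_subtractf sum_distrib_left)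
      finally show ?thesis .
    qed
    also have "(\<Sum>i<n. \<Sum>j<n. A i j * (x i)^2) = (\<Sum>i<n. dg i * (x i)^2)"
      by (simp add: dgA sum_distrib_right)
    also have "(\<Sum>i<n. \<Sum>j<n. A i j * (x j)^2) = (\<Sum>j<n. \<Sum>i<n. A j i * (x j)^2)"
      by (subst sum.swap) (simp add: Asym)
    also have "\<dots> = (\<Sum>i<n. dg i * (x i)^2)"
      by (simp add: dgA sum_distrib_right)
    finally show ?thesis by simp
  qed
  have H2: "(\<Sum>i<n. \<Sum>j<n. A i j * (x i - x j)^2) = 2 * (\<Sum>e\<in>E. Dx x e)"
  proof -
    have "(\<Sum>i<n. \<Sum>j<n. A i j * (x i - x j)^2) = (\<Sum>i<n. \<Sum>j<n. \<Sum>e\<in>E. if e = {i,j} then Dx x e else 0)"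
    proof (intro sum.cong refl)
      fix i j
      have "(\<Sum>e\<in>E. if e = {i,j} then Dx x e else 0) = (if {i,j}\<in>E then Dx x {i,j} else 0)"
        by (rule sum.delta[OF fin])
      then show "A i j * (x i - x j)^2 = (\<Sum>e\<in>E. if e = {i,j} then Dx x e else 0)"
        by (cases "{i,j}\<in>E") (simp_all only: A_def Dx_pair if_True if_False mult_1 mult_zero_left)
    qed
    also have "\<dots> = (\<Sum>i<n. \<Sum>e\<in>E. \<Sum>j<n. if e = {i,j} then Dx x e else 0)"
      by (rule sum.cong[OF refl], rule sum.swap)
    also have "\<dots> = (\<Sum>e\<in>E. \<Sum>i<n. \<Sum>j<n. if e = {i,j} then Dx x e else 0)"
      by (rule sum.swap)
    also have "\<dots> = (\<Sum>e\<in>E. 2 * Dx x e)"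
    proof (rule sum.cong[OF refl])
      fix e assume e: "e \<in> E"
      then obtain a b where ab: "e = {a,b}" "a \<noteq> b" "a < n" "b < n" using sg_edge[OF sg] by blast
      have "(\<Sum>i<n. \<Sum>j<n. if e = {i,j} then Dx x e else 0) = Dx x e * (\<Sum>i<n. \<Sum>j<n. if {a,b} = {i,j} then 1 else 0)"
        unfolding ab(1) sum_distrib_left by (intro sum.cong refl) simp
      then show "(\<Sum>i<n. \<Sum>j<n. if e = {i,j} then Dx x e else 0) = 2 * Dx x e"
        using count_pairs[OF ab(2-4)] by simp
    qed
    finally show ?thesis by (simp add: sum_distrib_left)
  qed
  show ?thesis using Q1 H1 H2 by simp
qed


theorem theorem2:
  fixes n :: nat and E :: "nat set set" and \<alpha> :: "nat \<Rightarrow> nat \<Rightarrow> nat list \<Rightarrow> real"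
  assumes "n \<ge> 2" and "simple_graph n E" and "connected_graph n E"
    and "path_weighting n E \<alpha>"
  shows "lambda2 n E \<ge> real n / cgs_max n E \<alpha>"
proof -
  note n = assms(1) and sg = assms(2) and pw = assms(4)
  let ?L = "laplacian n E"
  let ?K = "cgs_max n E \<alpha>"
  have Q: "real n * (\<Sum>i<n. (x i)^2) - (\<Sum>i<n. x i)^2 \<le> ?K * (\<Sum>i<n. \<Sum>j<n. ?L$$(i,j) * x i * x j)" for x
    using main_ineq[OF sg pw, of x] lap_quad[OF sg, of x] by simp
  define x0 where "x0 i = (if i = 0 then 1 else 0::real)" for i :: nat
  have sq: "(x0 i)^2 = x0 i" for i unfolding x0_def by simp
  have s1: "(\<Sum>i<n. x0 i) = 1" using n unfolding x0_def by (simp add: sum.If_cases)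
  have s2: "(\<Sum>i<n. (x0 i)^2) = 1" unfolding sq by (rule s1)
  have "real n * (\<Sum>i<n. (x0 i)^2) - (\<Sum>i<n. x0 i)^2 \<ge> 1" unfolding s1 s2 using n by simp
  then have K1: "1 \<le> ?K * (\<Sum>e\<in>E. Dx x0 e)" using main_ineq[OF sg pw, of x0] by linarith
  have "(\<Sum>e\<in>E. Dx x0 e) \<ge> 0" by (intro sum_nonneg Dx_nonneg)
  then have K: "?K > 0" using K1
    by (metis mult_nonpos_nonneg not_less not_one_le_zero order_trans)
  have "real n / ?K \<le> sorted_list_of_multiset (proots (char_poly ?L)) ! 1"
    by (rule spectral_bound[OF lap_carrier lap_sym lap_rows[OF sg] n K Q])
  then show ?thesis unfolding lambda2_def lap_eigenvalues_def .
qed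

end
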